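(* Let $b$ be a slowly varying function satisfying $\lim_{t\to0^+}b(t)\in(0,\infty)$. Then there is a function $c:(0,\infty)\to(0,\infty)$ satisfying $c\approx b$ on $(0,\infty)$ that has continuous classical derivatives of all orders (i.e. $c\in\mathcal{C}^\infty((0,\infty))$) and that also satisfies $\lim_{t\to0^+}c(t)\in(0,\infty)$. Furthermore, if $b$ is constant on some right neighbourhood of zero, then $c$ can be chosen in such a way that additionally $\lim_{t\to0^+}c^{(n)}(t)=0$ for all integers $n\ge1$.
   Context: A measurable function $b:(0,\infty)\to(0,\infty)$ is called slowly varying if for every $\varepsilon>0$ there exist a non-decreasing function $b_\varepsilon$ and a non-increasing function $b_{-\varepsilon}$ on $(0,\infty)$ such that $t^{\varepsilon}b(t)\approx b_\varepsilon(t)$ and $t^{-\varepsilon}b(t)\approx b_{-\varepsilon}(t)$ on $(0,\infty)$, where $f\approx g$ means $C^{-1}g\le f\le Cg$ for some constant $C\ge1$ independent of the argument. Measurability is with respect to Lebesgue measure. The limit $\lim_{t\to0^+}c(t)$ need not equal $\lim_{t\to0^+}b(t)$. *)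

theory Defs
  imports "HOL-Analysis.Analysis"
begin

definition equiv_on :: "real set \<Rightarrow> (real \<Rightarrow> real) \<Rightarrow> (real \<Rightarrow> real) \<Rightarrow> bool" where
  "equiv_on S f g \<longleftrightarrow> (\<exists>C\<ge>1. \<forall>t\<in>S. g t / C \<le> f t \<and> f t \<le> C * g t)"

definition slowly_varying :: "(real \<Rightarrow> real) \<Rightarrow> bool" where
  "slowly_varying b \<longleftrightarrow>
     b \<in> borel_measurable (restrict_space lebesgue {0<..}) \<and>
     (\<forall>t>0. b t > 0) \<and>
     (\<forall>\<epsilon>>0. \<exists>bp bm :: real \<Rightarrow> real.
        mono_on {0<..} bp \<and> antimono_on {0<..} bm \<and>
        equiv_on {0<..} (\<lambda>t. t powr \<epsilon> * b t) bp \<and>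
        equiv_on {0<..} (\<lambda>t. t powr (-\<epsilon>) * b t) bm)"

definition smooth_on :: "real set \<Rightarrow> (real \<Rightarrow> real) \<Rightarrow> bool" where
  "smooth_on S c \<longleftrightarrow>
     (\<forall>n. \<forall>t\<in>S. ((deriv ^^ n) c) differentiable (at t)) \<and>
     (\<forall>n. continuous_on S ((deriv ^^ n) c))"

end

theory Submission
  imports Defs "HOL-Complex_Analysis.Complex_Analysis" "HOL-Real_Asymp.Real_Asymp"
begin

lemma powr_mhalf: "(x::real) > 0 \<Longrightarrow> x powr (-(1/2)) * y = y / sqrt x"
  by (simp add: powr_minus_divide powr_half_sqrt)

lemma potter:
  assumes sv: "slowly_varying b"
  obtains K where "K \<ge> 1"
    "\<And>s t. 0 < s \<Longrightarrow> s \<le> t \<Longrightarrow> b s \<le> K * sqrt (t/s) * b t"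
    "\<And>s t. 0 < s \<Longrightarrow> s \<le> t \<Longrightarrow> b t \<le> K * sqrt (t/s) * b s"
proof -
  obtain bp bm where mp: "mono_on {0<..} bp" and am: "antimono_on {0<..} bm"
    and ep: "equiv_on {0<..} (\<lambda>t. t powr (1/2) * b t) bp"
    and em: "equiv_on {0<..} (\<lambda>t. t powr (-(1/2)) * b t) bm"
  proof -
    note E = sv[unfolded slowly_varying_def, THEN conjunct2, THEN conjunct2]
    from this[rule_format, of "1/2"] show ?thesis using that by auto
  qed
  obtain C1 where C1: "C1 \<ge> 1" "\<And>t. t > 0 \<Longrightarrow> bp t / C1 \<le> t powr (1/2) * b t \<and> t powr (1/2) * b t \<le> C1 * bp t"
    using ep unfolding equiv_on_def by auto
  obtain C2 where C2: "C2 \<ge> 1" "\<And>t. t > 0 \<Longrightarrow> bm t / C2 \<le> t powr (-(1/2)) * b t \<and> t powr (-(1/2)) * b t \<le> C2 * bm t"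
    using em unfolding equiv_on_def by auto
  define K where "K = max (C1^2) (C2^2)"
  have "1 \<le> C1^2" using C1(1) by (simp add: one_le_power)
  then have K1: "K \<ge> 1" unfolding K_def by linarith
  note bpos0 = sv[unfolded slowly_varying_def, THEN conjunct2, THEN conjunct1]
  have bpos: "\<And>t. t > 0 \<Longrightarrow> b t > 0" using bpos0 by blast
  have A: "b s \<le> K * sqrt (t/s) * b t" if "0 < s" "s \<le> t" for s t
  proof -
    have "sqrt s * b s \<le> C1 * bp s" using C1(2)[of s] that by (simp add: powr_half_sqrt)
    also have "\<dots> \<le> C1 * bp t" using mp that C1(1) by (intro mult_left_mono) (auto simp: mono_on_def)
    also have "\<dots> \<le> C1 * (C1 * (sqrt t * b t))"
      using C1(2)[of t] that C1(1) by (intro mult_left_mono) (auto simp: powr_half_sqrt divide_le_eq mult_ac)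
    finally have *: "sqrt s * b s \<le> C1^2 * sqrt t * b t" by (simp add: power2_eq_square mult_ac)
    have bt: "b t \<ge> 0" using bpos[of t] that by simp
    have "C1^2 * sqrt t * b t \<le> K * sqrt t * b t" unfolding K_def
      using bt that by (intro mult_right_mono) auto
    with * have "sqrt s * b s \<le> K * sqrt t * b t" by linarith
    then have "b s \<le> (K * sqrt t * b t) / sqrt s" using that by (simp add: le_divide_eq mult_ac)
    then show ?thesis by (simp add: real_sqrt_divide)
  qed
  have B: "b t \<le> K * sqrt (t/s) * b s" if "0 < s" "s \<le> t" for s t
  proof -
    have "b t / sqrt t \<le> C2 * bm t" using C2(2)[of t] that by (simp add: powr_mhalf)
    also have "\<dots> \<le> C2 * bm s" using am that C2(1) by (intro mult_left_mono) (auto simp: monotone_on_def)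
    also have "\<dots> \<le> C2 * (C2 * (b s / sqrt s))"
    proof -
      have "bm s / C2 \<le> b s / sqrt s" using C2(2)[of s] that by (simp add: powr_mhalf)
      then have "bm s \<le> C2 * (b s / sqrt s)" using C2(1) by (simp add: divide_le_eq mult_ac)
      then show ?thesis using C2(1) by (intro mult_left_mono) auto
    qed
    finally have *: "b t / sqrt t \<le> C2^2 * (b s / sqrt s)" by (simp add: power2_eq_square mult_ac)
    have bs: "b s \<ge> 0" using bpos[of s] that by simp
    have "C2^2 * (b s / sqrt s) \<le> K * (b s / sqrt s)" unfolding K_def
      using bs that by (intro mult_right_mono) auto
    with * have "b t / sqrt t \<le> K * (b s / sqrt s)" by linarith
    then have "b t \<le> sqrt t * (K * (b s / sqrt s))" using that by (simp add: divide_le_eq mult_ac)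
    then show ?thesis by (simp add: real_sqrt_divide mult_ac)
  qed
  show ?thesis using K1 A B that by blast
qed

definition phic :: "complex \<Rightarrow> complex" where
  "phic w = exp (- 1 / w) * w / (1 + w)^2"

lemma Re_inv_pos: "Re z > 0 \<Longrightarrow> Re (1 / z) > 0"
  by (auto simp: Re_divide intro!: divide_pos_pos add_pos_nonneg)

lemma phic_bound:
  assumes z: "Re z > 0"
  shows "cmod (phic (z / 2^n)) \<le> exp (- Re (1 / z)) * cmod z / 2^n"
proof -
  define w where "w = z / 2^n"
  have Rw: "Re w = Re z / 2^n" unfolding w_def by simp
  have "1 \<le> Re (1 + w)" using Rw z by simp
  also have "\<dots> \<le> cmod (1 + w)" by (rule complex_Re_le_cmod)
  finally have n1: "1 \<le> cmod (1 + w)" .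
  have nz: "1 + w \<noteq> 0" using n1 by auto
  from n1 have n2: "1 \<le> cmod ((1 + w)^2)" by (simp add: norm_power one_le_power)
  have "Re (1 / w) = 2^n * Re (1 / z)" unfolding w_def by (simp add: Re_divide)
  moreover have "Re (1/z) \<le> 2^n * Re (1 / z)"
    using Re_inv_pos[OF z] by (simp add: mult_le_cancel_right1 one_le_power)
  ultimately have e: "cmod (exp (- 1 / w)) \<le> exp (- Re (1/z))"
    by (simp add: norm_exp_eq_Re)
  have "cmod (phic w) = cmod (exp (- 1 / w)) * cmod w / cmod ((1 + w)^2)"
    unfolding phic_def by (simp add: norm_mult norm_divide)
  also have "\<dots> \<le> cmod (exp (- 1 / w)) * cmod w"
    using n2 nz divide_left_mono[of 1 "cmod ((1 + w)^2)" "cmod (exp (- 1 / w)) * cmod w"] by (simp add: zero_less_mult_iff)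
  also have "\<dots> \<le> exp (- Re (1/z)) * cmod w" using e by (simp add: mult_right_mono)
  also have "cmod w = cmod z / 2^n" unfolding w_def by (simp add: norm_divide norm_power)
  finally show ?thesis by (simp add: w_def)
qed

lemma exp_mRe_le1: "Re z > 0 \<Longrightarrow> exp (- Re (1 / z)) \<le> 1"
  using Re_inv_pos[of z] by simp

lemma phic_holo: "(\<lambda>z. of_real (a::real) * phic (z / 2^n)) holomorphic_on {z. Re z > 0}"
proof -
  have "(\<lambda>z. of_real a * (exp (- 1 / (z / 2^n)) * (z / 2^n) / (1 + z / 2^n)^2)) holomorphic_on {z. Re z > 0}"
  proof (intro holomorphic_intros)
    fix z :: complex assume "z \<in> {z. Re z > 0}"
    then have "Re z > 0" by simp
    then show "z / 2^n \<noteq> 0" by auto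
    have "Re (1 + z / 2^n) > 0" using \<open>Re z > 0\<close> by (simp add: add_pos_nonneg)
    then have "1 + z / 2^n \<noteq> 0" by (metis less_irrefl zero_complex.sel(1))
    then show "(1 + z / 2^n)^2 \<noteq> 0" by simp
  qed simp_all
  then show ?thesis unfolding phic_def by simp
qed

lemma holo_part:
  fixes a :: "nat \<Rightarrow> real"
  assumes a0: "\<And>k. a k \<ge> 0" and aB: "\<And>k. a k \<le> A * sqrt 2 ^ k"
  obtains g where "g holomorphic_on {z. Re z > 0}"
    "\<And>z. Re z > 0 \<Longrightarrow> (\<lambda>n. of_real (a n) * phic (z / 2^n)) sums g z"
proof -
  let ?H = "{z. Re z > 0}"
  have opn: "open ?H" by (simp add: open_halfspace_Re_gt)
  define f where "f n z = of_real (a n) * phic (z / 2^n)" for n z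
  have hf: "f n holomorphic_on ?H" for n unfolding f_def by (rule phic_holo)
  define q :: real where "q = 1 / sqrt 2"
  have q: "0 \<le> q" "q < 1" unfolding q_def by (auto simp: divide_less_eq)
  have aq: "a k / 2^k \<le> A * q^k" for k
  proof -
    have "(2::real)^k = sqrt 2 ^ k * sqrt 2 ^ k" by (simp flip: power_mult_distrib)
    then have "A * sqrt 2 ^ k / 2^k = A * q^k" unfolding q_def by (simp add: power_divide)
    moreover have "a k / 2^k \<le> A * sqrt 2 ^ k / 2^k" using aB[of k] by (simp add: divide_right_mono)
    ultimately show ?thesis by simp
  qed
  have fb: "cmod (f n y) \<le> a n * cmod y / 2^n" if "Re y > 0" for n y
  proof -
    have "cmod (f n y) = a n * cmod (phic (y / 2^n))" unfolding f_def using a0[of n] by (simp add: norm_mult)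
    also have "\<dots> \<le> a n * (exp (- Re (1 / y)) * cmod y / 2^n)"
      using phic_bound[OF that, of n] a0[of n] by (intro mult_left_mono) auto
    also have "\<dots> \<le> a n * (1 * cmod y / 2^n)"
      using exp_mRe_le1[OF that] a0[of n] by (intro mult_left_mono divide_right_mono mult_right_mono) auto
    finally show ?thesis by simp
  qed
  have "\<exists>g g'. \<forall>x \<in> ?H. ((\<lambda>n. f n x) sums g x) \<and> ((\<lambda>n. deriv (f n) x) sums g' x) \<and> (g has_field_derivative g' x) (at x)"
  proof (rule series_and_derivative_comparison_complex[OF opn])
    fix n x assume "x \<in> ?H"
    then show "(f n has_field_derivative deriv (f n) x) (at x)"
      using hf opn by (intro holomorphic_derivI) auto
  next
    fix x assume "x \<in> ?H"
    define h where "h n = complex_of_real ((cmod x + 1) * A * q^n)" for n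
    have A0: "A \<ge> 0" using aB[of 0] a0[of 0] by simp
    have S1: "summable h" unfolding h_def summable_complex_of_real
        using q by (intro summable_mult summable_geometric) auto
    have S2: "range h \<subseteq> \<real>\<^sub>\<ge>\<^sub>0" unfolding h_def using A0 q by auto
    have S3: "\<forall>\<^sub>F n in sequentially. \<forall>y\<in>ball x 1 \<inter> ?H. cmod(f n y) \<le> cmod (h n)"
      proof (intro always_eventually allI ballI)
        fix n y assume y: "y \<in> ball x 1 \<inter> ?H"
        have ny: "cmod y \<le> cmod x + 1" using y norm_triangle_ineq2[of y x]
          by (auto simp: dist_norm norm_minus_commute)
        have "cmod (f n y) \<le> a n * cmod y / 2^n" using fb y by auto
        also have "\<dots> = (a n / 2^n) * cmod y" by simp
        also have "\<dots> \<le> (A * q^n) * (cmod x + 1)"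
          using aq[of n] ny a0[of n] A0 q by (intro mult_mono) auto
        also have "\<dots> = cmod (h n)" unfolding h_def norm_of_real using A0 q by (simp add: abs_mult mult_ac)
        finally show "cmod (f n y) \<le> cmod (h n)" .
      qed
    show "\<exists>d h. 0 < d \<and> summable h \<and> range h \<subseteq> \<real>\<^sub>\<ge>\<^sub>0 \<and> (\<forall>\<^sub>F n in sequentially. \<forall>y\<in>ball x d \<inter> ?H. cmod(f n y) \<le> cmod (h n))"
      using S1 S2 S3 zero_less_one by blast
  qed
  then obtain g g' where gg: "\<And>x. x \<in> ?H \<Longrightarrow> ((\<lambda>n. f n x) sums g x) \<and> (g has_field_derivative g' x) (at x)"
    by blast
  have "g holomorphic_on ?H"
    using gg by (metis (no_types, lifting) field_differentiable_def field_differentiable_at_within holomorphic_on_def)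
  then show ?thesis using that gg unfolding f_def by auto
qed

definition phir :: "real \<Rightarrow> real" where
  "phir s = exp (- 1 / s) * s / (1 + s)^2"

lemma phic_real: "phic (complex_of_real s / 2^n) = complex_of_real (phir (s / 2^n))"
  unfolding phic_def phir_def by (simp add: exp_of_real[symmetric])

lemma phir_nonneg: "s > 0 \<Longrightarrow> 0 \<le> phir s"
  unfolding phir_def by simp

lemma phir_le1: "s > 0 \<Longrightarrow> phir s \<le> s"
proof -
  assume s: "s > 0"
  have "exp (- 1 / s) \<le> 1" using s by simp
  moreover have "1 \<le> (1 + s)^2" using s by (simp add: one_le_power)
  ultimately have "exp (- 1 / s) * s / (1 + s)^2 \<le> 1 * s / 1"
    using s by (intro frac_le mult_right_mono) auto
  then show ?thesis unfolding phir_def by simp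
qed

lemma phir_le2: "s > 0 \<Longrightarrow> phir s \<le> 1 / s"
proof -
  assume s: "s > 0"
  have "exp (- 1 / s) \<le> 1" using s by simp
  moreover have "s * s \<le> (1 + s)^2" using s by (simp add: power2_eq_square algebra_simps)
  then have "s / (1 + s)^2 \<le> 1 / s" using s by (simp add: field_simps)
  ultimately have "exp (- 1 / s) * (s / (1 + s)^2) \<le> 1 * (1 / s)"
    using s by (intro mult_mono) auto
  then show ?thesis unfolding phir_def by simp
qed

lemma phir_low: "1 \<le> s \<Longrightarrow> s \<le> 2 \<Longrightarrow> exp (-1) / 9 \<le> phir s"
proof -
  assume s: "1 \<le> s" "s \<le> 2"
  have "exp (-1) \<le> exp (- 1 / s)" using s by (simp add: field_simps)
  moreover have "1 / 9 \<le> s / (1 + s)^2"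
  proof -
    have "s * s \<le> 2 * s" using s by (intro mult_right_mono) auto
    moreover have "(1 + s)^2 = 1 + 2 * s + s * s" by (simp add: power2_eq_square algebra_simps)
    ultimately have "(1 + s)^2 \<le> 9 * s" using s by linarith
    then show ?thesis using s by (simp add: field_simps)
  qed
  ultimately have "exp (-1) * (1/9) \<le> exp (- 1 / s) * (s / (1 + s)^2)"
    by (intro mult_mono) auto
  then show ?thesis unfolding phir_def by simp
qed

lemma twosided:
  fixes q :: real
  assumes q: "0 \<le> q" "q < 1"
  shows "summable (\<lambda>j. if j \<le> k then q^(k-j) else q^(j-k-1))"
    "(\<Sum>j. if j \<le> k then q^(k-j) else q^(j-k-1)) \<le> 2 / (1 - q)"
proof -
  define f where "f j = (if j \<le> k then q^(k-j) else q^(j-k-1))" for j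
  have sh: "f (n + Suc k) = q^n" for n unfolding f_def by simp
  have sg: "summable (\<lambda>n. q^n)" using q by (intro summable_geometric) auto
  have "summable (\<lambda>n. f (n + Suc k))" unfolding sh using sg .
  then show sf: "summable (\<lambda>j. if j \<le> k then q^(k-j) else q^(j-k-1))"
    using summable_iff_shift[of f "Suc k"] unfolding f_def by simp
  have "(\<Sum>j. f j) = (\<Sum>n. f (n + Suc k)) + (\<Sum>i<Suc k. f i)"
    using sf unfolding f_def[abs_def] by (rule suminf_split_initial_segment)
  also have "(\<Sum>n. f (n + Suc k)) = 1 / (1 - q)" unfolding sh using q by (simp add: suminf_geometric)
  also have "(\<Sum>i<Suc k. f i) = (\<Sum>i<Suc k. q^(k - i))" unfolding f_def by simp
  also have "\<dots> = (\<Sum>i<Suc k. q^i)"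
    using sum.nat_diff_reindex[of "\<lambda>i. q^i" "Suc k"] by simp
  also have "\<dots> \<le> 1 / (1 - q)"
  proof -
    have "(\<Sum>i<Suc k. q^i) \<le> (\<Sum>i. q^i)"
      using sg q by (intro sum_le_suminf) auto
    then show ?thesis using q by (simp add: suminf_geometric)
  qed
  finally show "(\<Sum>j. if j \<le> k then q^(k-j) else q^(j-k-1)) \<le> 2 / (1 - q)"
    unfolding f_def by simp
qed

lemma re_deriv_aux:
  fixes F :: "complex \<Rightarrow> complex"
  assumes hol: "F holomorphic_on H" and opn: "open H" and sub: "\<And>t. t > 0 \<Longrightarrow> complex_of_real t \<in> H"
  shows "(deriv ^^ n) F holomorphic_on H \<and>
         (\<forall>t>0. (deriv ^^ n) (\<lambda>t. Re (F (complex_of_real t))) t = Re ((deriv ^^ n) F (complex_of_real t)))"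
proof (induction n)
  case 0
  then show ?case using hol by simp
next
  case (Suc n)
  let ?G = "(deriv ^^ n) F"
  let ?c = "(deriv ^^ n) (\<lambda>t. Re (F (complex_of_real t)))"
  have holG: "?G holomorphic_on H" using Suc by blast
  have ih: "\<And>t. t > 0 \<Longrightarrow> ?c t = Re (?G (complex_of_real t))" using Suc by blast
  have D: "(?c has_field_derivative Re (deriv ?G (complex_of_real t))) (at t)" if t: "t > 0" for t
  proof (subst DERIV_cong_ev[OF refl _ refl])
    have "(?G has_field_derivative deriv ?G (complex_of_real t)) (at (complex_of_real t))"
      using holG opn sub[OF t] by (rule holomorphic_derivI)
    then show "((Re \<circ> ?G \<circ> complex_of_real) has_field_derivative Re (deriv ?G (complex_of_real t))) (at t)"
      by (auto intro!: derivative_eq_intros has_vector_derivative_real_field simp: o_def)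
    from eventually_nhds_in_nhd[of t "{0<..}"] t
    show "eventually (\<lambda>y. ?c y = (Re \<circ> ?G \<circ> complex_of_real) y) (nhds t)"
      by (auto elim!: eventually_mono simp: ih interior_open)
  qed
  have "deriv ?G holomorphic_on H" using holG opn by (rule holomorphic_deriv)
  moreover have "\<forall>t>0. deriv ?c t = Re (deriv ?G (complex_of_real t))"
    using D DERIV_imp_deriv by blast
  ultimately show ?case by simp
qed

lemma re_deriv_has:
  fixes F :: "complex \<Rightarrow> complex"
  assumes hol: "F holomorphic_on H" and opn: "open H" and sub: "\<And>t. t > 0 \<Longrightarrow> complex_of_real t \<in> H"
    and t: "t > 0"
  shows "((deriv ^^ n) (\<lambda>t. Re (F (complex_of_real t))) has_field_derivative
          Re (deriv ((deriv ^^ n) F) (complex_of_real t))) (at t)"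
proof -
  let ?G = "(deriv ^^ n) F"
  let ?c = "(deriv ^^ n) (\<lambda>t. Re (F (complex_of_real t)))"
  have holG: "?G holomorphic_on H" using re_deriv_aux[OF hol opn sub] by blast
  have ih: "\<And>t. t > 0 \<Longrightarrow> ?c t = Re (?G (complex_of_real t))" using re_deriv_aux[OF hol opn sub] by blast
  show ?thesis
  proof (subst DERIV_cong_ev[OF refl _ refl])
    have "(?G has_field_derivative deriv ?G (complex_of_real t)) (at (complex_of_real t))"
      using holG opn sub[OF t] by (rule holomorphic_derivI)
    then show "((Re \<circ> ?G \<circ> complex_of_real) has_field_derivative Re (deriv ?G (complex_of_real t))) (at t)"
      by (auto intro!: derivative_eq_intros has_vector_derivative_real_field simp: o_def)
    from eventually_nhds_in_nhd[of t "{0<..}"] t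
    show "eventually (\<lambda>y. ?c y = (Re \<circ> ?G \<circ> complex_of_real) y) (nhds t)"
      by (auto elim!: eventually_mono simp: ih interior_open)
  qed
qed

lemma smooth_Re:
  fixes F :: "complex \<Rightarrow> complex"
  assumes hol: "F holomorphic_on H" and opn: "open H" and sub: "\<And>t. t > 0 \<Longrightarrow> complex_of_real t \<in> H"
  shows "smooth_on {0<..} (\<lambda>t. Re (F (complex_of_real t)))"
  unfolding smooth_on_def
proof (intro conjI allI ballI)
  fix n and t :: real assume "t \<in> {0<..}"
  then have t: "t > 0" by simp
  note D = re_deriv_has[OF hol opn sub t, of n]
  show "(deriv ^^ n) (\<lambda>t. Re (F (complex_of_real t))) differentiable (at t)"
    using D by (meson has_field_derivative_imp_has_derivative differentiableI)
next
  fix n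
  show "continuous_on {0<..} ((deriv ^^ n) (\<lambda>t. Re (F (complex_of_real t))))"
    using re_deriv_has[OF hol opn sub] by (intro continuous_at_imp_continuous_on) (auto intro: DERIV_isCont)
qed

lemma b_bounds01:
  fixes b :: "real \<Rightarrow> real"
  assumes P1: "\<And>s t. 0 < s \<Longrightarrow> s \<le> t \<Longrightarrow> b s \<le> K * sqrt (t/s) * b t"
    and P2: "\<And>s t. 0 < s \<Longrightarrow> s \<le> t \<Longrightarrow> b t \<le> K * sqrt (t/s) * b s"
    and bpos: "\<And>t. t > 0 \<Longrightarrow> b t > 0" and K: "K \<ge> 1" and L: "L > 0" and lim: "(b \<longlongrightarrow> L) (at_right 0)"
  obtains m M where "m > 0" "M > 0" "\<And>t. 0 < t \<Longrightarrow> t \<le> 1 \<Longrightarrow> m \<le> b t \<and> b t \<le> M"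
proof -
  have "eventually (\<lambda>t. b t > L/2) (at_right 0)" using lim L by (intro order_tendstoD) auto
  moreover have "eventually (\<lambda>t. b t < 2*L) (at_right 0)" using lim L by (intro order_tendstoD) auto
  ultimately have "eventually (\<lambda>t. L/2 < b t \<and> b t < 2*L) (at_right 0)" by eventually_elim auto
  then obtain d0 where d0: "d0 > 0" "\<And>t. t > 0 \<Longrightarrow> t < d0 \<Longrightarrow> L/2 < b t \<and> b t < 2*L"
    unfolding eventually_at_right_field by auto
  define d where "d = min d0 1"
  have d: "d > 0" "d \<le> 1" "d \<le> d0" unfolding d_def using d0 by auto
  define s0 where "s0 = d / 2"
  have s0: "s0 > 0" "s0 < d0" "L/2 < b s0" "b s0 < 2*L" using d d0(2)[of s0] unfolding s0_def by auto
  define R where "R = K * sqrt (2/d)"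
  have R: "R > 0" unfolding R_def using K d by auto
  define m where "m = min (L/2) (L/2/R)"
  define M where "M = max (2*L) (R*(2*L))"
  have "m > 0" "M > 0" unfolding m_def M_def using L R by auto
  moreover have "m \<le> b t \<and> b t \<le> M" if t: "0 < t" "t \<le> 1" for t
  proof (cases "t < d")
    case True
    then have "L/2 < b t \<and> b t < 2*L" using d0(2)[of t] d t by auto
    then show ?thesis unfolding m_def M_def by auto
  next
    case False
    then have st: "s0 \<le> t" unfolding s0_def using d by auto
    have sq: "K * sqrt (t/s0) \<le> R" unfolding R_def s0_def using t d K
      by (intro mult_left_mono real_sqrt_le_mono) (auto simp: field_simps)
    have bt0: "b t > 0" using bpos t by auto
    have "b t \<le> K * sqrt (t/s0) * b s0" using P2[OF s0(1) st] .
    also have "\<dots> \<le> R * (2*L)" using sq s0 K R by (intro mult_mono) auto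
    finally have up: "b t \<le> M" unfolding M_def by auto
    have "L/2 \<le> K * sqrt (t/s0) * b t" using P1[OF s0(1) st] s0 by auto
    also have "\<dots> \<le> R * b t" using sq bt0 by (intro mult_right_mono) auto
    finally have "L/2/R \<le> b t" using R by (simp add: divide_le_eq mult_ac)
    then show ?thesis using up unfolding m_def by auto
  qed
  ultimately show ?thesis using that by blast
qed

lemma sqrt_over_geo:
  fixes x :: real
  assumes x: "0 < x" "2^m \<le> x"
  shows "sqrt x * (1 / x) \<le> (1 / sqrt 2)^m"
proof -
  have "sqrt x * (1 / x) = 1 / sqrt x" using x
    by (metis div_by_1 divide_divide_eq_right nonzero_mult_div_cancel_left real_div_sqrt
        less_imp_le real_sqrt_gt_0_iff times_divide_eq_right order_less_irrefl)
  also have "\<dots> \<le> 1 / sqrt (2^m)" using x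
    by (intro divide_left_mono real_sqrt_le_mono) auto
  also have "\<dots> = (1 / sqrt 2)^m" by (simp add: real_sqrt_power power_one_over)
  finally show ?thesis .
qed

lemma term_bound:
  fixes b :: "real \<Rightarrow> real"
  assumes P1: "\<And>s t. 0 < s \<Longrightarrow> s \<le> t \<Longrightarrow> b s \<le> K * sqrt (t/s) * b t"
    and P2: "\<And>s t. 0 < s \<Longrightarrow> s \<le> t \<Longrightarrow> b t \<le> K * sqrt (t/s) * b s"
    and bpos: "\<And>t. t > 0 \<Longrightarrow> b t > 0" and K: "K \<ge> 1"
    and t: "2^k \<le> t" "t < 2^(k+1)"
  shows "b (2^j) * phir (t / 2^j) \<le> K * b t * (if j \<le> k then (1 / sqrt 2)^(k-j) else (1 / sqrt 2)^(j-k-1))"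
proof (cases "j \<le> k")
  case True
  have t0: "t > 0" using t(1) by (smt (verit) zero_less_power)
  have tj: "2^j \<le> t" using True t(1) by (smt (verit) power_increasing one_le_numeral)
  define x where "x = t / 2^j"
  have x0: "x > 0" unfolding x_def using t0 by simp
  have xk: "2^(k-j) \<le> x" unfolding x_def using t(1) True
    by (simp add: power_diff le_divide_eq mult.commute)
  have "b (2^j) * phir (t / 2^j) \<le> (K * sqrt x * b t) * (1 / x)"
    unfolding x_def using P1[of "2^j" t] tj phir_le2[of "t/2^j"] phir_nonneg[of "t/2^j"] t0 bpos[of t] K
    by (intro mult_mono) auto
  also have "\<dots> = K * b t * (sqrt x * (1 / x))" by (simp add: mult_ac)
  also have "\<dots> \<le> K * b t * (1 / sqrt 2)^(k-j)"
    using sqrt_over_geo[OF x0 xk] K bpos[of t] t0 by (intro mult_left_mono) auto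
  finally show ?thesis using True by simp
next
  case False
  have t0: "t > 0" using t(1) by (smt (verit) zero_less_power)
  have tj: "t \<le> 2^j" using False t(2) by (smt (verit) power_increasing one_le_numeral Suc_leI not_le Suc_eq_plus1)
  define x where "x = 2^j / t"
  have x0: "x > 0" unfolding x_def using t0 by simp
  have e: "(2::real)^(j-k-1) = 2^j / 2^(k+1)" using False by (simp add: power_diff)
  have xk: "2^(j-k-1) \<le> x" unfolding x_def e using t(2) t0
    by (intro divide_left_mono) auto
  have "b (2^j) * phir (t / 2^j) \<le> (K * sqrt x * b t) * (1 / x)"
    unfolding x_def using P2[of t "2^j"] tj phir_le1[of "t/2^j"] phir_nonneg[of "t/2^j"] t0 bpos[of t] K
    by (intro mult_mono) auto
  also have "\<dots> = K * b t * (sqrt x * (1 / x))" by (simp add: mult_ac)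
  also have "\<dots> \<le> K * b t * (1 / sqrt 2)^(j-k-1)"
    using sqrt_over_geo[OF x0 xk] K bpos[of t] t0 by (intro mult_left_mono) auto
  finally show ?thesis using False by simp
qed

lemma dyadic_ivl:
  fixes t :: real
  assumes "1 \<le> t"
  obtains k :: nat where "2^k \<le> t" "t < 2^(k+1)"
proof -
  obtain n :: nat where "t < 2^n" using real_arch_pow[of 2 t] by auto
  define N where "N = (LEAST n::nat. t < 2^n)"
  have tN: "t < 2^N" unfolding N_def by (rule LeastI) fact
  have N0: "N \<noteq> 0" using tN assms by (intro notI) simp
  have "\<not> t < 2^(N-1)" unfolding N_def by (rule not_less_Least) (use N0 N_def in auto)
  then have "2^(N-1) \<le> t" by simp
  moreover have "t < 2^(N-1+1)" using tN N0 by simp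
  ultimately show ?thesis using that by blast
qed

lemma Fbound:
  fixes a :: "nat \<Rightarrow> real" and g :: "complex \<Rightarrow> complex"
  assumes gs: "\<And>z. Re z > 0 \<Longrightarrow> (\<lambda>n. of_real (a n) * phic (z / 2^n)) sums g z"
    and a0: "\<And>k. a k \<ge> 0" and sa: "summable (\<lambda>n. a n / 2^n)"
    and t: "t > 0" "t \<le> 1" and w: "w \<in> ball (complex_of_real t) (t/2)"
  shows "cmod (g w - exp (- 1 / w)) \<le> exp (- 2 / (9 * t)) * (1 + 2 * (\<Sum>n. a n / 2^n))"
proof -
  have dw: "cmod (w - of_real t) < t / 2" using w by (simp add: dist_norm norm_minus_commute)
  have "\<bar>Re w - t\<bar> \<le> cmod (w - of_real t)" using abs_Re_le_cmod[of "w - of_real t"] by simp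
  then have Rw: "Re w > t / 2" using dw by linarith
  have "cmod w \<le> cmod (complex_of_real t) + cmod (w - of_real t)"
    using norm_triangle_ineq[of "complex_of_real t" "w - of_real t"] by simp
  then have nw: "cmod w < 3 * t / 2" using dw t by simp
  have w0: "Re w > 0" using Rw t by linarith
  have "Re (1 / w) = Re w / (cmod w)^2" by (simp add: Re_divide cmod_power2)
  moreover have "(t/2) / (3 * t / 2)^2 \<le> Re w / (cmod w)^2"
  proof (rule frac_le)
    show "0 \<le> Re w" using w0 by simp
    show "t / 2 \<le> Re w" using Rw by simp
    have "cmod w > 0" using w0 by auto
    then show "0 < (cmod w)^2" by simp
    show "(cmod w)^2 \<le> (3 * t / 2)^2" using nw by (intro power_mono) auto
  qed
  moreover have "(t/2) / (3 * t / 2)^2 = 2 / (9 * t)" using t by (simp add: power2_eq_square field_simps)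
  ultimately have Rinv: "2 / (9 * t) \<le> Re (1 / w)" by simp
  define E where "E = exp (- Re (1 / w))"
  have E: "E \<le> exp (- 2 / (9 * t))" "E \<ge> 0" unfolding E_def using Rinv by auto
  have ne: "cmod (exp (- 1 / w)) = E" unfolding E_def by simp
  define S0 where "S0 = (\<Sum>n. a n / 2^n)"
  have S0: "S0 \<ge> 0" unfolding S0_def using sa a0 by (intro suminf_nonneg) auto
  have tb: "cmod (of_real (a n) * phic (w / 2^n)) \<le> (E * cmod w) * (a n / 2^n)" for n
  proof -
    have "cmod (of_real (a n) * phic (w / 2^n)) = a n * cmod (phic (w / 2^n))"
      using a0[of n] by (simp add: norm_mult)
    also have "\<dots> \<le> a n * (E * cmod w / 2^n)"
      unfolding E_def using phic_bound[OF w0, of n] a0[of n] by (intro mult_left_mono) auto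
    finally show ?thesis by (simp add: mult_ac)
  qed
  have sn: "summable (\<lambda>n. cmod (of_real (a n) * phic (w / 2^n)))"
    by (rule summable_comparison_test'[OF summable_mult[OF sa, of "E * cmod w"]]) (use tb in auto)
  have "cmod (g w) = cmod (\<Sum>n. of_real (a n) * phic (w / 2^n))"
    using gs[OF w0] by (simp add: sums_iff)
  also have "\<dots> \<le> (\<Sum>n. cmod (of_real (a n) * phic (w / 2^n)))" by (rule summable_norm[OF sn])
  also have "\<dots> \<le> (\<Sum>n. (E * cmod w) * (a n / 2^n))"
    by (rule suminf_le[OF tb sn summable_mult[OF sa]])
  also have "\<dots> = (E * cmod w) * S0" unfolding S0_def by (rule suminf_mult[OF sa])
  also have "\<dots> \<le> (E * 2) * S0" using E nw t S0 by (intro mult_right_mono mult_left_mono) auto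
  finally have ng: "cmod (g w) \<le> E * 2 * S0" .
  have "cmod (g w - exp (- 1 / w)) \<le> cmod (g w) + cmod (exp (- 1 / w))" by (rule norm_triangle_ineq4)
  also have "\<dots> \<le> E * (1 + 2 * S0)" using ng ne by (simp add: algebra_simps)
  also have "\<dots> \<le> exp (- 2 / (9 * t)) * (1 + 2 * S0)" using E S0 by (intro mult_right_mono) auto
  finally show ?thesis unfolding S0_def .
qed

theorem lemma3p3:
  fixes b :: "real \<Rightarrow> real"
  assumes "slowly_varying b"
    and "\<exists>L>0. (b \<longlongrightarrow> L) (at_right 0)"
  shows "(\<exists>c :: real \<Rightarrow> real. (\<forall>t>0. c t > 0) \<and> equiv_on {0<..} c b \<and> smooth_on {0<..} c \<and>
           (\<exists>L>0. (c \<longlongrightarrow> L) (at_right 0))) \<and>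
         ((\<exists>\<delta>>0. \<exists>k. \<forall>t\<in>{0<..<\<delta>}. b t = k) \<longrightarrow>
         (
         \<exists>c :: real \<Rightarrow> real. (\<forall>t>0. c t > 0) \<and> equiv_on {0<..} c b \<and> smooth_on {0<..} c \<and>
           (\<exists>L>0. (c \<longlongrightarrow> L) (at_right 0)) \<and>
           (\<forall>n\<ge>1. ((deriv ^^ n) c \<longlongrightarrow> 0) (at_right 0))))"
proof -
  note svd = assms(1)[unfolded slowly_varying_def]
  have bpos: "\<And>t. t > 0 \<Longrightarrow> b t > 0" using svd[THEN conjunct2, THEN conjunct1] by blast
  obtain K where K: "K \<ge> 1"
    and P1: "\<And>s t. 0 < s \<Longrightarrow> s \<le> t \<Longrightarrow> b s \<le> K * sqrt (t/s) * b t"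
    and P2: "\<And>s t. 0 < s \<Longrightarrow> s \<le> t \<Longrightarrow> b t \<le> K * sqrt (t/s) * b s"
    using potter[OF assms(1)] by blast
  obtain L where L: "L > 0" "(b \<longlongrightarrow> L) (at_right 0)" using assms(2) by blast
  obtain m M where mM: "m > 0" "M > 0" "\<And>t. 0 < t \<Longrightarrow> t \<le> 1 \<Longrightarrow> m \<le> b t \<and> b t \<le> M"
    using b_bounds01[OF P1 P2 bpos K L] by blast
  define a where "a k = b (2^k)" for k :: nat
  define A where "A = K * b 1"
  define q :: real where "q = 1 / sqrt 2"
  have q: "0 \<le> q" "q < 1" unfolding q_def by (auto simp: divide_less_eq)
  have b1: "b 1 > 0" using bpos by simp
  have A0: "A \<ge> 0" unfolding A_def using K b1 by simp
  have a0: "\<And>k. a k \<ge> 0" unfolding a_def using bpos by (simp add: less_imp_le)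
  have aB: "a k \<le> A * sqrt 2 ^ k" for k
  proof -
    have "b (2^k) \<le> K * sqrt (2^k/1) * b 1" using P2[of 1 "2^k"] by (simp add: one_le_power)
    then show ?thesis unfolding a_def A_def by (simp add: real_sqrt_power mult_ac)
  qed
  have aq: "a k / 2^k \<le> A * q^k" for k
  proof -
    have "(2::real)^k = sqrt 2 ^ k * sqrt 2 ^ k" by (simp flip: power_mult_distrib)
    then have "A * sqrt 2 ^ k / 2^k = A * q^k" unfolding q_def by (simp add: power_divide)
    moreover have "a k / 2^k \<le> A * sqrt 2 ^ k / 2^k" using aB[of k] by (simp add: divide_right_mono)
    ultimately show ?thesis by simp
  qed
  have sa: "summable (\<lambda>n. a n / 2^n)"
    by (rule summable_comparison_test'[OF summable_mult[OF summable_geometric, of q A]])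
       (use q aq a0 in auto)
  define S0 where "S0 = (\<Sum>n. a n / 2^n)"
  have S0: "S0 \<ge> 0" unfolding S0_def using sa a0 by (intro suminf_nonneg) auto
  obtain g where holg: "g holomorphic_on {z. Re z > 0}"
    and gs: "\<And>z. Re z > 0 \<Longrightarrow> (\<lambda>n. of_real (a n) * phic (z / 2^n)) sums g z"
    using holo_part[OF a0 aB] by blast
  define F where "F z = 1 - exp (- 1 / z) + g z" for z
  have opnH: "open {z. Re z > 0}" by (simp add: open_halfspace_Re_gt)
  have holF: "F holomorphic_on {z. Re z > 0}" unfolding F_def
    by (intro holomorphic_intros holg) auto
  have subH: "\<And>t. t > 0 \<Longrightarrow> complex_of_real t \<in> {z. Re z > 0}" by simp
  define c where "c t = Re (F (complex_of_real t))" for t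
  have smooth: "smooth_on {0<..} c" unfolding c_def[abs_def] using smooth_Re[OF holF opnH subH] .
  define r where "r t = (\<Sum>n. a n * phir (t / 2^n))" for t
  have rsum: "summable (\<lambda>n. a n * phir (t / 2^n))" if t: "t > 0" for t
  proof (rule summable_comparison_test'[OF summable_mult[OF sa, of t]])
    fix n :: nat
    have "a n * phir (t / 2^n) \<le> a n * (t / 2^n)"
      using phir_le1[of "t/2^n"] t a0[of n] by (intro mult_left_mono) auto
    then show "norm (a n * phir (t / 2^n)) \<le> t * (a n / 2^n)"
      using phir_nonneg[of "t/2^n"] t a0[of n] by (simp add: mult_ac)
  qed
  have rbd: "0 \<le> r t \<and> r t \<le> t * S0" if t: "t > 0" for t
  proof
    show "0 \<le> r t" unfolding r_def using rsum[OF t] phir_nonneg[of "t/2^_"] t a0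
      by (intro suminf_nonneg) auto
    have "r t \<le> (\<Sum>n. t * (a n / 2^n))" unfolding r_def
    proof (rule suminf_le[OF _ rsum[OF t] summable_mult[OF sa]])
      fix n :: nat
      have "a n * phir (t / 2^n) \<le> a n * (t / 2^n)"
        using phir_le1[of "t/2^n"] t a0[of n] by (intro mult_left_mono) auto
      then show "a n * phir (t / 2^n) \<le> t * (a n / 2^n)" by (simp add: mult_ac)
    qed
    also have "\<dots> = t * S0" unfolding S0_def by (rule suminf_mult[OF sa])
    finally show "r t \<le> t * S0" .
  qed
  have cform: "c t = 1 - exp (- 1 / t) + r t" if t: "t > 0" for t
  proof -
    have "(\<lambda>n. a n * phir (t / 2^n)) sums r t" using rsum[OF t] unfolding r_def by (simp add: summable_sums)
    then have s1: "(\<lambda>n. complex_of_real (a n * phir (t / 2^n))) sums complex_of_real (r t)"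
      by (subst sums_of_real_iff)
    have "(\<lambda>n. of_real (a n) * phic (complex_of_real t / 2^n)) sums g (of_real t)" using gs[of "of_real t"] t by simp
    then have s2: "(\<lambda>n. complex_of_real (a n * phir (t / 2^n))) sums g (of_real t)"
      unfolding phic_real by simp
    have "g (of_real t) = of_real (r t)" using sums_unique2[OF s2 s1] .
    moreover have "exp (- 1 / complex_of_real t) = complex_of_real (exp (- 1 / t))"
      by (simp add: exp_of_real[symmetric])
    ultimately show ?thesis unfolding c_def F_def by simp
  qed
  have cpos: "\<forall>t>0. c t > 0"
  proof (intro allI impI)
    fix t :: real assume t: "t > 0"
    have "exp (- 1 / t) < 1" using t by simp
    then show "c t > 0" using cform[OF t] rbd[OF t] by linarith
  qed
  have clim: "(c \<longlongrightarrow> 1) (at_right 0)"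
  proof (rule LIM_zero_cancel, rule Lim_null_comparison)
    show "eventually (\<lambda>t. norm (c t - 1) \<le> exp (- 1 / t) + t * S0) (at_right 0)"
      unfolding eventually_at_right_field
    proof (intro exI[of _ 1] conjI allI impI)
      fix t :: real assume "0 < t" "t < 1"
      then show "norm (c t - 1) \<le> exp (- 1 / t) + t * S0"
      proof -
        have e: "exp (- 1 / t) > 0" by simp
        have "norm (c t - 1) = \<bar>r t - exp (- 1 / t)\<bar>" using cform[of t] \<open>0 < t\<close> by simp
        then show ?thesis using e rbd[of t] \<open>0 < t\<close> by linarith
      qed
    qed simp
    show "((\<lambda>t. exp (- 1 / t) + t * S0) \<longlongrightarrow> 0) (at_right 0)" by real_asymp
  qed
  have equiv: "equiv_on {0<..} c b"
  proof -
    define C where "C = max (max 1 (2*M)) (max ((1+S0)/m) (max (18*K*exp 1) (K*(1/b 1 + 2/(1-q)))))"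
    have C1: "C \<ge> 1" "C \<ge> 2*M" "C \<ge> (1+S0)/m" "C \<ge> 18*K*exp 1" "C \<ge> K*(1/b 1 + 2/(1-q))"
      unfolding C_def by auto
    have Cpos: "C > 0" using C1(1) by simp
    have "b t / C \<le> c t \<and> c t \<le> C * b t" if t: "t > 0" for t
    proof (cases "t \<le> 1")
      case True
      have e1: "exp (- 1 / t) \<le> exp (- 1)" using t True by (simp add: field_simps)
      have e2: "exp (- 1 :: real) \<le> 1 / 2"
      proof -
        have "2 \<le> exp (1::real)" using exp_ge_add_one_self[of 1] by simp
        then show ?thesis by (simp add: exp_minus field_simps)
      qed
      have lo: "1 / 2 \<le> c t" using cform[OF t] rbd[OF t] e1 e2 by linarith
      have tS: "t * S0 \<le> S0" by (rule mult_left_le_one_le) (use S0 t True in auto)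
      have e3: "exp (- 1 / t) > 0" by simp
      have hi: "c t \<le> 1 + S0" using cform[OF t] rbd[OF t] tS e3 by linarith
      have bm: "m \<le> b t" "b t \<le> M" using mM(3)[OF t True] by auto
      show ?thesis
      proof
        have "b t / C \<le> M / C" using bm Cpos by (simp add: divide_right_mono)
        also have "\<dots> \<le> 1 / 2" using C1(2) mM Cpos by (simp add: field_simps)
        finally show "b t / C \<le> c t" using lo by linarith
        have "1 + S0 \<le> C * m" using C1(3) mM by (simp add: divide_le_eq mult_ac)
        also have "C * m \<le> C * b t" using bm Cpos by simp
        finally show "c t \<le> C * b t" using hi by linarith
      qed
    next
      case False
      then have t1: "1 \<le> t" by simp
      obtain k where k: "2^k \<le> t" "t < 2^(k+1)" using dyadic_ivl[OF t1] by blast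
      have bt: "b t > 0" using bpos t by simp
      have tk1: "1 \<le> t / 2^k" using k by (simp add: le_divide_eq)
      have tk2: "t / 2^k \<le> 2" using k by (simp add: divide_le_eq mult.commute)
      have "a k * (exp (-1) / 9) \<le> a k * phir (t / 2^k)"
        using phir_low[OF tk1 tk2] a0[of k] by (intro mult_left_mono) auto
      also have "\<dots> \<le> r t"
      proof -
        have "sum (\<lambda>n. a n * phir (t / 2^n)) {k} \<le> r t" unfolding r_def
          using a0 phir_nonneg t by (intro sum_le_suminf[OF rsum[OF t]]) auto
        then show ?thesis by simp
      qed
      also have "r t \<le> c t"
      proof -
        have "exp (- 1 / t) \<le> 1" using t by simp
        then show ?thesis using cform[OF t] by linarith
      qed
      finally have lo1: "a k * (exp (-1) / 9) \<le> c t" .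
      have "b t \<le> K * sqrt (t / 2^k) * a k" unfolding a_def using P2[of "2^k" t] k by simp
      also have "\<dots> \<le> K * 2 * a k"
      proof -
        have "sqrt (t / 2^k) \<le> sqrt (2^2)" using tk2 by (intro real_sqrt_le_mono) auto
        then have "sqrt (t / 2^k) \<le> 2" by simp
        then show ?thesis using K a0[of k] by (intro mult_right_mono mult_left_mono) auto
      qed
      finally have bk: "b t \<le> K * 2 * a k" .
      have lo: "b t / C \<le> c t"
      proof -
        have "b t / C \<le> b t / (18 * K * exp 1)"
          using C1(4) bt K Cpos by (intro divide_left_mono) auto
        also have "\<dots> \<le> (K * 2 * a k) / (18 * K * exp 1)"
          using bk K by (intro divide_right_mono) auto
        also have "\<dots> = a k * (exp (-1) / 9)" using K by (simp add: exp_minus field_simps)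
        finally show ?thesis using lo1 by linarith
      qed
      have u1: "1 - exp (- 1 / t) \<le> K * b t / b 1"
      proof -
        have "1 + (- 1 / t) \<le> exp (- 1 / t)" by (rule exp_ge_add_one_self)
        then have "1 - exp (- 1 / t) \<le> 1 / t" by simp
        also have "\<dots> \<le> 1 / sqrt t"
        proof -
          have st: "1 \<le> sqrt t" using t1 by simp
          have "1 * sqrt t \<le> sqrt t * sqrt t" by (rule mult_right_mono[OF st]) (use t in simp)
          moreover have "sqrt t * sqrt t = t" using t by simp
          ultimately have "sqrt t \<le> t" by linarith
          then show ?thesis using st by (intro divide_left_mono) auto
        qed
        also have "\<dots> \<le> K * b t / b 1"
        proof -
          have "b 1 \<le> K * sqrt (t / 1) * b t" using P1[of 1 t] t1 by simp
          then show ?thesis using b1 t1 by (simp add: field_simps)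
        qed
        finally show ?thesis .
      qed
      have u2: "r t \<le> K * b t * (2 / (1 - q))"
      proof -
        define d where "d j = (if j \<le> k then q^(k-j) else q^(j-k-1))" for j
        have sd: "summable d" unfolding d_def by (rule twosided(1)[OF q])
        have "r t \<le> (\<Sum>j. K * b t * d j)" unfolding r_def
        proof (rule suminf_le[OF _ rsum[OF t] summable_mult[OF sd]])
          fix j :: nat
          show "a j * phir (t / 2^j) \<le> K * b t * d j"
            unfolding a_def d_def q_def using term_bound[OF P1 P2 bpos K k, of j] by simp
        qed
        also have "\<dots> = K * b t * (\<Sum>j. d j)" by (rule suminf_mult[OF sd])
        also have "\<dots> \<le> K * b t * (2 / (1 - q))"
          using twosided(2)[OF q, of k] K bt unfolding d_def by (intro mult_left_mono) auto
        finally show ?thesis .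
      qed
      have "c t \<le> K * b t / b 1 + K * b t * (2 / (1 - q))" using cform[OF t] u1 u2 by linarith
      also have "\<dots> = (K * (1 / b 1 + 2 / (1 - q))) * b t" by (simp add: algebra_simps)
      also have "\<dots> \<le> C * b t" using C1(5) bt by (intro mult_right_mono) auto
      finally show ?thesis using lo by simp
    qed
    then show ?thesis unfolding equiv_on_def using C1(1) by auto
  qed
  have dlim: "\<forall>n\<ge>1. ((deriv ^^ n) c \<longlongrightarrow> 0) (at_right 0)"
  proof (intro allI impI)
    fix n :: nat assume n: "n \<ge> 1"
    define B where "B t = 2 * exp (- 2 / (9 * t)) * (1 + 2 * S0)" for t :: real
    show "((deriv ^^ n) c \<longlongrightarrow> 0) (at_right 0)"
    proof (rule Lim_null_comparison)
      show "((\<lambda>t. fact n * B t / (t/2)^n) \<longlongrightarrow> 0) (at_right 0)" unfolding B_def by real_asymp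
      show "eventually (\<lambda>t. norm ((deriv ^^ n) c t) \<le> fact n * B t / (t/2)^n) (at_right 0)"
        unfolding eventually_at_right_field
      proof (intro exI[of _ 1] conjI allI impI)
        fix t :: real assume t: "0 < t" "t < 1"
        have eq: "(deriv ^^ n) c t = Re ((deriv ^^ n) F (complex_of_real t))"
          using re_deriv_aux[OF holF opnH subH, of n] t unfolding c_def[abs_def] by blast
        have ballH: "cball (complex_of_real t) (t/2) \<subseteq> {z. Re z > 0}"
        proof
          fix w assume "w \<in> cball (complex_of_real t) (t/2)"
          then have "cmod (w - of_real t) \<le> t/2" by (simp add: dist_norm norm_minus_commute)
          moreover have "\<bar>Re w - t\<bar> \<le> cmod (w - of_real t)" using abs_Re_le_cmod[of "w - of_real t"] by simp
          ultimately show "w \<in> {z. Re z > 0}" using t by auto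
        qed
        have "cmod ((deriv ^^ n) F (complex_of_real t)) \<le> fact n * B t / (t/2)^n"
        proof (rule Cauchy_higher_deriv_bound)
          show "F holomorphic_on ball (complex_of_real t) (t/2)"
            using holF ballH ball_subset_cball by (blast intro: holomorphic_on_subset)
          show "continuous_on (cball (complex_of_real t) (t/2)) F"
            using holomorphic_on_imp_continuous_on[OF holF] ballH by (rule continuous_on_subset)
          show "0 < t/2" using t by simp
          show "0 < n" using n by simp
        next
          fix w assume w: "w \<in> ball (complex_of_real t) (t/2)"
          have "cmod (g w - exp (- 1 / w)) \<le> exp (- 2 / (9 * t)) * (1 + 2 * S0)"
            using Fbound[OF gs a0 sa, of t w] t w unfolding S0_def by simp
          also have "\<dots> < B t" unfolding B_def using S0 by simp
          finally have "cmod (g w - exp (- 1 / w)) < B t" .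
          moreover have "dist 1 (F w) = cmod (g w - exp (- 1 / w))"
            unfolding F_def dist_norm by (metis (no_types, lifting) add_diff_cancel_left' diff_add_eq_diff_diff_swap norm_minus_commute diff_diff_eq2)
          ultimately show "F w \<in> ball 1 (B t)" by simp
        qed
        then show "norm ((deriv ^^ n) c t) \<le> fact n * B t / (t/2)^n"
          unfolding eq real_norm_def using abs_Re_le_cmod order_trans by blast
      qed simp
    qed
  qed
  have main: "(\<forall>t>0. c t > 0) \<and> equiv_on {0<..} c b \<and> smooth_on {0<..} c \<and>
           (\<exists>L>0. (c \<longlongrightarrow> L) (at_right 0))"
    using cpos equiv smooth clim zero_less_one by blast
  show ?thesis using main dlim by blast
qed

end
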